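(* Let $C_n$ be the cycle on $n\geq 3$ vertices. Then $\gamma_{gr}^{2}(C_n)=n-1$, $\gamma_{gr}^{L,2}(C_n)=n$, $\gamma_{gr}^{Z,2}(C_n)=n-1$, and $\gamma_{gr}^{t,2}(C_n)=n$.
   Context: For a vertex $v$, $N(v)$ is its open neighborhood and $N[v]=N(v)\cup\{v\}$. Let $k$ be a positive integer. A sequence $S=(v_1,\ldots,v_m)$ of distinct vertices is a $k$-sequence (resp. $k$-$L$-sequence, $k$-$Z$-sequence, $k$-$t$-sequence) if for each $i\in[m]$ there is a vertex $u_i$ with $u_i\in N[v_i]$ (resp. $N[v_i]$, $N(v_i)$, $N(v_i)$) such that the number of indices $j<i$ with $u_i\in N[v_j]$ (resp. $N(v_j)$, $N[v_j]$, $N(v_j)$) is less than $k$. The numbers $\gamma_{gr}^{k}(G)$, $\gamma_{gr}^{L,k}(G)$, $\gamma_{gr}^{Z,k}(G)$, $\gamma_{gr}^{t,k}(G)$ are the maximum lengths of such sequences, respectively. *)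

theory Defs
  imports Main
begin

definition nbh :: "'a set \<Rightarrow> ('a \<Rightarrow> 'a \<Rightarrow> bool) \<Rightarrow> 'a \<Rightarrow> 'a set" where
  "nbh V E v = {u \<in> V. E v u}"

definition cnbh :: "'a set \<Rightarrow> ('a \<Rightarrow> 'a \<Rightarrow> bool) \<Rightarrow> 'a \<Rightarrow> 'a set" where
  "cnbh V E v = insert v (nbh V E v)"

text \<open>Generic k-sequence: footprint choice A (where u_i is taken from, relative to v_i)
  and covering choice B (u_i is counted as covered by v_j when u_i \<in> B v_j).\<close>

definition gen_kseq :: "nat \<Rightarrow> 'a set \<Rightarrow> ('a \<Rightarrow> 'a set) \<Rightarrow> ('a \<Rightarrow> 'a set) \<Rightarrow> 'a list \<Rightarrow> bool" where
  "gen_kseq k V A B S \<longleftrightarrow> distinct S \<and> set S \<subseteq> V \<and>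
     (\<forall>i < length S. \<exists>u \<in> A (S ! i). card {j. j < i \<and> u \<in> B (S ! j)} < k)"

definition kseq :: "nat \<Rightarrow> 'a set \<Rightarrow> ('a \<Rightarrow> 'a \<Rightarrow> bool) \<Rightarrow> 'a list \<Rightarrow> bool" where
  "kseq k V E = gen_kseq k V (cnbh V E) (cnbh V E)"

definition kLseq :: "nat \<Rightarrow> 'a set \<Rightarrow> ('a \<Rightarrow> 'a \<Rightarrow> bool) \<Rightarrow> 'a list \<Rightarrow> bool" where
  "kLseq k V E = gen_kseq k V (cnbh V E) (nbh V E)"

definition kZseq :: "nat \<Rightarrow> 'a set \<Rightarrow> ('a \<Rightarrow> 'a \<Rightarrow> bool) \<Rightarrow> 'a list \<Rightarrow> bool" where
  "kZseq k V E = gen_kseq k V (nbh V E) (cnbh V E)"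

definition ktseq :: "nat \<Rightarrow> 'a set \<Rightarrow> ('a \<Rightarrow> 'a \<Rightarrow> bool) \<Rightarrow> 'a list \<Rightarrow> bool" where
  "ktseq k V E = gen_kseq k V (nbh V E) (nbh V E)"

text \<open>Maximum length of a sequence satisfying P (P only admits distinct lists over a
  finite vertex set, so the set of lengths is finite; it contains 0 via the empty list).\<close>

definition max_len :: "('a list \<Rightarrow> bool) \<Rightarrow> nat" where
  "max_len P = Max {length S | S. P S}"

definition gamma_gr :: "nat \<Rightarrow> 'a set \<Rightarrow> ('a \<Rightarrow> 'a \<Rightarrow> bool) \<Rightarrow> nat" where
  "gamma_gr k V E = max_len (kseq k V E)"

definition gamma_gr_L :: "nat \<Rightarrow> 'a set \<Rightarrow> ('a \<Rightarrow> 'a \<Rightarrow> bool) \<Rightarrow> nat" where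
  "gamma_gr_L k V E = max_len (kLseq k V E)"

definition gamma_gr_Z :: "nat \<Rightarrow> 'a set \<Rightarrow> ('a \<Rightarrow> 'a \<Rightarrow> bool) \<Rightarrow> nat" where
  "gamma_gr_Z k V E = max_len (kZseq k V E)"

definition gamma_gr_t :: "nat \<Rightarrow> 'a set \<Rightarrow> ('a \<Rightarrow> 'a \<Rightarrow> bool) \<Rightarrow> nat" where
  "gamma_gr_t k V E = max_len (ktseq k V E)"

definition cycle_V :: "nat \<Rightarrow> nat set" where
  "cycle_V n = {0..<n}"

definition cycle_E :: "nat \<Rightarrow> nat \<Rightarrow> nat \<Rightarrow> bool" where
  "cycle_E n i j \<longleftrightarrow> i < n \<and> j < n \<and> i \<noteq> j \<and> (j = (i + 1) mod n \<or> i = (j + 1) mod n)"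

end

theory Submission imports Defs begin

lemma modsuc_inj: "i < n \<Longrightarrow> j < n \<Longrightarrow> Suc i mod n = Suc j mod n \<Longrightarrow> i = j"
  by (metis Suc_lessI mod_Suc mod_less nat.inject nat.distinct(1) mod_self)

lemma E_succ: assumes "j < n" "i < n" "cycle_E n j (Suc i mod n)" shows "j = Suc (Suc i) mod n \<or> j = i"
  using assms modsuc_inj unfolding cycle_E_def by (metis mod_Suc_eq Suc_eq_plus1)

lemma max_len_eq: assumes "P S0" "length S0 = m" "\<And>S. P S \<Longrightarrow> length S \<le> m" shows "max_len P = m"
proof -
  have "{length S | S. P S} \<subseteq> {..m}" using assms(3) by auto
  hence f: "finite {length S | S. P S}" by (rule finite_subset) simp
  show ?thesis unfolding max_len_def
    by (rule Max_eqI[OF f]) (use assms in auto)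
qed

lemma len_le: assumes "gen_kseq k (cycle_V n) A B S" shows "length S \<le> n"
proof -
  have "distinct S" "set S \<subseteq> {0..<n}" using assms unfolding gen_kseq_def cycle_V_def by auto
  thus ?thesis by (metis card_atLeastLessThan card_mono distinct_card finite_atLeastLessThan minus_nat.diff_0)
qed

lemma in_nbh_succ: assumes "n \<ge> 3" "i < n" shows "Suc i mod n \<in> nbh (cycle_V n) (cycle_E n) i"
proof -
  have "Suc i mod n \<noteq> i"
  proof (cases "Suc i < n")
    case True thus ?thesis by simp
  next
    case False hence "Suc i = n" using assms by simp
    thus ?thesis using assms by auto
  qed
  thus ?thesis using assms unfolding nbh_def cycle_V_def cycle_E_def by auto
qed

lemma lower:
  assumes n3: "n \<ge> 3" and mn: "m \<le> n"
    and A: "\<And>v. nbh (cycle_V n) (cycle_E n) v \<subseteq> A v"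
    and B: "\<And>i j. i < m \<Longrightarrow> j < i \<Longrightarrow> Suc i mod n \<in> B j \<Longrightarrow> j = Suc (Suc i) mod n"
  shows "gen_kseq 2 (cycle_V n) A B [0..<m]"
  unfolding gen_kseq_def
proof (intro conjI allI impI)
  show "distinct [0..<m]" by simp
  show "set [0..<m] \<subseteq> cycle_V n" using mn unfolding cycle_V_def by auto
  fix i assume i: "i < length [0..<m]"
  hence im: "i < m" by simp
  have "Suc i mod n \<in> A ([0..<m] ! i)" using A in_nbh_succ[OF n3, of i] im mn by auto
  moreover have "{j. j < i \<and> Suc i mod n \<in> B ([0..<m] ! j)} \<subseteq> {Suc (Suc i) mod n}"
    using B im by auto
  hence "card {j. j < i \<and> Suc i mod n \<in> B ([0..<m] ! j)} \<le> 1"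
    using card_mono[of "{Suc (Suc i) mod n}"] by force
  ultimately show "\<exists>u\<in>A ([0..<m] ! i). card {j. j < i \<and> u \<in> B ([0..<m] ! j)} < 2" by force
qed

lemma B_nbh: assumes "i < m" "m \<le> n" "j < i" "Suc i mod n \<in> nbh (cycle_V n) (cycle_E n) j"
  shows "j = Suc (Suc i) mod n"
  using assms E_succ[of j n i] unfolding nbh_def by auto

lemma B_cnbh: assumes "i < m" "m < n" "j < i" "Suc i mod n \<in> cnbh (cycle_V n) (cycle_E n) j"
  shows "j = Suc (Suc i) mod n"
  using assms E_succ[of j n i] unfolding cnbh_def nbh_def by auto

lemma sucmod: "x < n \<Longrightarrow> Suc x mod n = (if Suc x = n then 0 else Suc x)"
  by (simp add: mod_Suc)

lemma cnbh_iff: assumes "u < n" "n \<ge> 3"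
  shows "u \<in> cnbh (cycle_V n) (cycle_E n) x \<longleftrightarrow> x < n \<and> (x = u \<or> x = Suc u mod n \<or> u = Suc x mod n)"
  using assms unfolding cnbh_def nbh_def cycle_V_def cycle_E_def
  by (auto simp: sucmod split: if_splits)

lemma two_others: assumes "u < n" "n \<ge> 3" "u \<in> cnbh (cycle_V n) (cycle_E n) v"
  shows "\<exists>x y. x \<noteq> y \<and> x \<noteq> v \<and> y \<noteq> v \<and> u \<in> cnbh (cycle_V n) (cycle_E n) x \<and> u \<in> cnbh (cycle_V n) (cycle_E n) y"
proof -
  have v: "v < n \<and> (v = u \<or> v = Suc u mod n \<or> u = Suc v mod n)" using assms cnbh_iff by blast
  have v2: "v < n \<and> (v = u \<or> v = (if Suc u = n then 0 else Suc u) \<or> u = (if Suc v = n then 0 else Suc v))"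
    using v sucmod[OF assms(1)] sucmod[of v n] by metis
  show ?thesis
  proof (cases "u = 0")
    case True
    hence "v = 0 \<or> v = 1 \<or> v = n - 1" using v2 assms by (auto split: if_splits)
    thus ?thesis using assms True unfolding cnbh_iff[OF assms(1,2)]
      apply (elim disjE)
      apply (rule exI[of _ 1], rule exI[of _ "n - 1"]; simp add: sucmod)
      apply (rule exI[of _ 0], rule exI[of _ "n - 1"]; simp add: sucmod)
      apply (rule exI[of _ 0], rule exI[of _ 1]; simp add: sucmod)
      done
  next
    case False
    hence "v = u \<or> v = Suc u mod n \<or> v = u - 1" using v2 assms by (auto split: if_splits)
    thus ?thesis using assms False unfolding cnbh_iff[OF assms(1,2)]
      apply (elim disjE)
      apply (rule exI[of _ "Suc u mod n"], rule exI[of _ "u - 1"]; auto simp add: sucmod)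
      apply (rule exI[of _ u], rule exI[of _ "u - 1"]; auto simp add: sucmod)
      apply (rule exI[of _ u], rule exI[of _ "Suc u mod n"]; auto simp add: sucmod)
      done
  qed
qed


lemma upper:
  assumes n3: "n \<ge> 3" and S: "gen_kseq 2 (cycle_V n) A (cnbh (cycle_V n) (cycle_E n)) S"
    and A: "\<And>v. A v \<subseteq> cnbh (cycle_V n) (cycle_E n) v"
  shows "length S \<le> n - 1"
proof (rule ccontr)
  assume "\<not> length S \<le> n - 1"
  hence len: "length S = n" using len_le[OF S] by simp
  have d: "distinct S" and sub: "set S \<subseteq> {0..<n}" using S unfolding gen_kseq_def cycle_V_def by auto
  have "card (set S) = n" using d len distinct_card by blast
  hence setS: "set S = {0..<n}" using sub by (simp add: card_subset_eq)
  define v where "v = S ! (n - 1)"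
  have "n - 1 < length S" using len n3 by simp
  then obtain u where u: "u \<in> A v" and c: "card {j. j < n - 1 \<and> u \<in> cnbh (cycle_V n) (cycle_E n) (S ! j)} < 2"
  proof -
    have "\<forall>i<length S. \<exists>u\<in>A (S ! i). card {j. j < i \<and> u \<in> cnbh (cycle_V n) (cycle_E n) (S ! j)} < 2"
      using S by (simp add: gen_kseq_def)
    hence "\<exists>u\<in>A v. card {j. j < n - 1 \<and> u \<in> cnbh (cycle_V n) (cycle_E n) (S ! j)} < 2"
      using \<open>n - 1 < length S\<close> unfolding v_def by blast
    thus ?thesis using that by blast
  qed
  have uc: "u \<in> cnbh (cycle_V n) (cycle_E n) v" using u A by blast
  have "v \<in> set S" unfolding v_def using \<open>n - 1 < length S\<close> by simp
  hence "v < n" using setS by simp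
  hence un: "u < n" using uc unfolding cnbh_def nbh_def cycle_V_def by auto
  obtain x y where xy: "x \<noteq> y" "x \<noteq> v" "y \<noteq> v" "u \<in> cnbh (cycle_V n) (cycle_E n) x" "u \<in> cnbh (cycle_V n) (cycle_E n) y"
    using two_others[OF un n3 uc] by blast
  have "x < n" "y < n" using xy(4,5) cnbh_iff[OF un n3] by auto
  hence "x \<in> set S" "y \<in> set S" using setS by auto
  then obtain jx jy where jx: "jx < n" "S ! jx = x" and jy: "jy < n" "S ! jy = y"
    using len unfolding in_set_conv_nth by blast
  have "jx \<noteq> n - 1" "jy \<noteq> n - 1" "jx \<noteq> jy" using jx jy xy v_def by auto
  hence "{jx, jy} \<subseteq> {j. j < n - 1 \<and> u \<in> cnbh (cycle_V n) (cycle_E n) (S ! j)}"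
    using jx jy xy by auto
  moreover have "finite {j. j < n - 1 \<and> u \<in> cnbh (cycle_V n) (cycle_E n) (S ! j)}" by simp
  ultimately have "card {jx, jy} \<le> card {j. j < n - 1 \<and> u \<in> cnbh (cycle_V n) (cycle_E n) (S ! j)}"
    by (rule card_mono[rotated])
  thus False using c \<open>jx \<noteq> jy\<close> by simp
qed

theorem mainTheorem5:
  fixes n :: nat
  assumes "n \<ge> 3"
  shows "gamma_gr 2 (cycle_V n) (cycle_E n) = n - 1 \<and>
         gamma_gr_L 2 (cycle_V n) (cycle_E n) = n \<and>
         gamma_gr_Z 2 (cycle_V n) (cycle_E n) = n - 1 \<and>
         gamma_gr_t 2 (cycle_V n) (cycle_E n) = n"
proof (intro conjI)
  let ?V = "cycle_V n" and ?E = "cycle_E n"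
  have sub: "\<And>v. nbh ?V ?E v \<subseteq> cnbh ?V ?E v"
    unfolding cnbh_def by auto
  have m: "n - 1 < n" "n - 1 \<le> n" using assms by auto
  have Bc: "\<And>i j. i < n - 1 \<Longrightarrow> j < i \<Longrightarrow> Suc i mod n \<in> cnbh ?V ?E j \<Longrightarrow> j = Suc (Suc i) mod n"
    using B_cnbh m(1) by blast
  have Bn: "\<And>i j. i < n \<Longrightarrow> j < i \<Longrightarrow> Suc i mod n \<in> nbh ?V ?E j \<Longrightarrow> j = Suc (Suc i) mod n"
    using B_nbh by blast
  have s1: "kseq 2 ?V ?E [0..<n-1]" unfolding kseq_def
    by (rule lower[OF assms m(2) sub Bc])
  have s2: "kZseq 2 ?V ?E [0..<n-1]" unfolding kZseq_def
    by (rule lower[OF assms m(2) order.refl Bc])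
  have s3: "kLseq 2 ?V ?E [0..<n]" unfolding kLseq_def
    by (rule lower[OF assms order.refl sub Bn])
  have s4: "ktseq 2 ?V ?E [0..<n]" unfolding ktseq_def
    by (rule lower[OF assms order.refl order.refl Bn])
  show "gamma_gr 2 ?V ?E = n - 1"
    unfolding gamma_gr_def
    by (rule max_len_eq[of "kseq 2 ?V ?E" "[0..<n-1]", OF s1]) (simp, unfold kseq_def, rule upper[OF assms _ order.refl])
  show "gamma_gr_Z 2 ?V ?E = n - 1"
    unfolding gamma_gr_Z_def
    by (rule max_len_eq[of "kZseq 2 ?V ?E" "[0..<n-1]", OF s2]) (simp, unfold kZseq_def, rule upper[OF assms _ sub])
  show "gamma_gr_L 2 ?V ?E = n"
    unfolding gamma_gr_L_def
    by (rule max_len_eq[of "kLseq 2 ?V ?E" "[0..<n]", OF s3]) (simp, unfold kLseq_def, rule len_le)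
  show "gamma_gr_t 2 ?V ?E = n"
    unfolding gamma_gr_t_def
    by (rule max_len_eq[of "ktseq 2 ?V ?E" "[0..<n]", OF s4]) (simp, unfold ktseq_def, rule len_le)
qed

end
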